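(* Consider the discrete-time system $$x(t+1)=A\,Z(x(t))+B\,u(t)+w(t),\qquad Z(x)=\begin{bmatrix}x\\ S(x)\end{bmatrix}\in\mathbb{R}^{n+N},$$ with unknown $A=[A_1\ \ A_2]$ ($A_1\in\mathbb{R}^{n\times n}$, $A_2\in\mathbb{R}^{n\times N}$), unknown $B\in\mathbb{R}^{n\times m}$, known differentiable $S:\mathbb{R}^n\to\mathbb{R}^N$ with $S(0)=0$, and disturbances satisfying $\|w(t)\|\le h_w$ for all $t$. Let $A_s=\frac{\partial S}{\partial x}(0)$, $Q(x)=S(x)-A_sx$, $\bar A_1=A_1+A_2A_s$; assume $(\bar A_1,B)$ is stabilizable and $Q$ is Lipschitz on the safe set $\mathcal{S}(F,g)=\{x: Fx\le g\}$ ($F\in\mathbb{R}^{s\times n}$, $g\in\mathbb{R}^s$), which is a polyhedral C-set. Let data $U_0,X_0,X_1,V_0$ be collected from this system (under unknown disturbances $W_0$), with $V_0$ of full row rank and $T\ge n+N+1$. Let $\lambda\in(0,1]$ and $\mathcal{W}_W=\{W\in\mathbb{R}^{n\times T}:\|W\|\le Th_w\}$. For $x\in\mathbb{R}^n$, $W\in\mathbb{R}^{n\times T}$, $w\in\mathbb{R}^n$ and $G_K=[G_{K,1}\ G_{K,2}]$ define $$\delta=X_1G_{K,2}Q(x)-W\big(G_{K,1}x+G_{K,2}Q(x)\big)+w.$$ Suppose there exist $G_K\in\mathbb{R}^{T\times(n+N)}$ and $P_s\in\mathbb{R}^{s\times s}$ such that $$P_sg\le\lambda g-l^{dw},\qquad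 P_sF=FX_1G_{K,1},\qquad V_0G_K=I,\qquad P_s\ge0,$$ where $l^{dw}=[l^{dw}_1,\dots,l^{dw}_s]^T$ with $$l^{dw}_i=\min_{G_{K,2}}\ \max_{x:\,Fx\le g}\ \max_{W\in\mathcal{W}_W}\ \max_{\|w\|\le h_w}\ F_i\,\delta,\quad i=1,\dots,s,$$ and the matrix $G_{K,2}$ in $G_K$ attains each of these minima. Then, with $K_1=U_0G_{K,1}$ and $K_2=U_0G_{K,2}$, the safe set $\mathcal{S}(F,g)$ is $\lambda$-contractive (and hence robustly invariant) for the closed-loop system under the controller $u(t)=K_1x(t)+K_2Q(x(t))$.
   Context: $\|\cdot\|$ is the infinity norm for vectors and the induced infinity norm (maximum absolute row sum) for matrices. Data: inputs $u(0),\dots,u(T-1)$ applied, states $x(0),\dots,x(T)$ recorded, unmeasured disturbances $w(0),\dots,w(T-1)$; $U_0=[u(0)\cdots u(T-1)]$, $X_0=[x(0)\cdots x(T-1)]$, $X_1=[x(1)\cdots x(T)]$, $W_0=[w(0)\cdots w(T-1)]$, $V_0=\begin{bmatrix}X_0\\ Q(X_0)\end{bmatrix}$ with $Q(X_0)=[Q(x(0))\cdots Q(x(T-1))]$; $G_{K,1}\in\mathbb{R}^{T\times n}$, $G_{K,2}\in\mathbb{R}^{T\times N}$. $F_i$ is the $i$-th row of $F$. Inequalities are elementwise; $P_s\ge0$ means entrywise nonnegative. A polyhedral C-set is a compact convex polyhedron containing the origin in its interior. The set $\mathcal{P}=\{x:Fx\le g\}$ is $\lambda$-contractive if $x(t)\in\mathcal{P}$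 implies $x(t+1)\in\{x:Fx\le\lambda g\}$ for all $t$ and all disturbances with $\|w(t)\|\le h_w$; robustly invariant if $x(0)\in\mathcal{P}$ implies $x(t)\in\mathcal{P}$ for all $t\ge0$ and all such disturbances. *)

theory Defs
  imports "HOL-Analysis.Analysis"
begin

definition vnorm_inf :: "real^'n \<Rightarrow> real" where
  "vnorm_inf x = Max (range (\<lambda>i. \<bar>x $ i\<bar>))"

definition mnorm_inf :: "real^'c^'r \<Rightarrow> real" where
  "mnorm_inf M = Max (range (\<lambda>i. \<Sum>j\<in>UNIV. \<bar>M $ i $ j\<bar>))"

definition schur_stable :: "real^'n^'n \<Rightarrow> bool" where
  "schur_stable M \<longleftrightarrow>
     (\<forall>(l::complex) (v::complex^'n). v \<noteq> 0 \<and> map_matrix complex_of_real M *v v = l *s v \<longrightarrow> cmod l < 1)"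

definition stabilizable :: "real^'n^'n \<Rightarrow> real^'m^'n \<Rightarrow> bool" where
  "stabilizable A B \<longleftrightarrow> (\<exists>K::real^'n^'m. schur_stable (A + B ** K))"

definition safe_set :: "real^'n^'s \<Rightarrow> real^'s \<Rightarrow> (real^'n) set" where
  "safe_set F g = {x. F *v x \<le> g}"

definition polyhedral_C_set :: "(real^'n) set \<Rightarrow> bool" where
  "polyhedral_C_set P \<longleftrightarrow> polyhedron P \<and> compact P \<and> convex P \<and> 0 \<in> interior P"

definition lambda_contractive ::
  "real^'n^'s \<Rightarrow> real^'s \<Rightarrow> real \<Rightarrow> real \<Rightarrow> (real^'n \<Rightarrow> real^'n) \<Rightarrow> bool" where
  "lambda_contractive F g lam hw f \<longleftrightarrow>
     (\<forall>(xs::nat \<Rightarrow> real^'n) (ws::nat \<Rightarrow> real^'n).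
        (\<forall>t. xs (Suc t) = f (xs t) + ws t \<and> vnorm_inf (ws t) \<le> hw) \<longrightarrow>
        (\<forall>t. F *v xs t \<le> g \<longrightarrow> F *v xs (Suc t) \<le> lam *\<^sub>R g))"

definition robustly_invariant ::
  "real^'n^'s \<Rightarrow> real^'s \<Rightarrow> real \<Rightarrow> (real^'n \<Rightarrow> real^'n) \<Rightarrow> bool" where
  "robustly_invariant F g hw f \<longleftrightarrow>
     (\<forall>(xs::nat \<Rightarrow> real^'n) (ws::nat \<Rightarrow> real^'n).
        (\<forall>t. xs (Suc t) = f (xs t) + ws t \<and> vnorm_inf (ws t) \<le> hw) \<longrightarrow>
        F *v xs 0 \<le> g \<longrightarrow> (\<forall>t. F *v xs t \<le> g))"

definition delta ::
  "real^'T^'n \<Rightarrow> real^'n^'T \<Rightarrow> real^'N^'T \<Rightarrow> (real^'n \<Rightarrow> real^'N)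
     \<Rightarrow> real^'n \<Rightarrow> real^'T^'n \<Rightarrow> real^'n \<Rightarrow> real^'n" where
  "delta X1 G1 G2 Q x W w = X1 *v (G2 *v Q x) - W *v (G1 *v x + G2 *v Q x) + w"

text \<open>The inner maxima  max_{x: Fx<=g} max_{W in W_W} max_{||w||<=hw} F_i delta,
  for a given G_{K,2}; W_W = {W. ||W|| <= T hw}.\<close>
definition ldw_obj ::
  "real^'n^'s \<Rightarrow> real^'s \<Rightarrow> real \<Rightarrow> real^'T^'n \<Rightarrow> real^'n^'T \<Rightarrow> (real^'n \<Rightarrow> real^'N)
     \<Rightarrow> 's \<Rightarrow> real^'N^'T \<Rightarrow> real" where
  "ldw_obj F g hw X1 G1 Q i G2 =
     Sup {(F *v delta X1 G1 G2 Q x W w) $ i | x W w.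
            F *v x \<le> g \<and> mnorm_inf W \<le> real CARD('T) * hw \<and> vnorm_inf w \<le> hw}"

end

theory Submission
  imports Defs
begin

lemma mv_sum: "(A::real^'n^'m) *v (\<Sum>j\<in>J. c j *\<^sub>R v j) = (\<Sum>j\<in>J. c j *\<^sub>R (A *v v j))"
  by (simp add: linear_sum[OF matrix_vector_mul_linear] matrix_vector_mult_scaleR o_def)
lemma comp_bound: "\<bar>((M::real^'c^'r) *v v) $ i\<bar> \<le> mnorm_inf M * vnorm_inf v"
proof -
  have vi: "\<bar>v$j\<bar> \<le> vnorm_inf v" for j unfolding vnorm_inf_def by (rule Max_ge) auto
  have "\<bar>(M *v v) $ i\<bar> = \<bar>\<Sum>j\<in>UNIV. M$i$j * v$j\<bar>" by (simp add: matrix_vector_mult_def)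
  also have "\<dots> \<le> (\<Sum>j\<in>UNIV. \<bar>M$i$j\<bar> * vnorm_inf v)"
    by (rule order_trans[OF sum_abs]) (auto intro!: sum_mono mult_left_mono vi simp: abs_mult)
  also have "\<dots> = (\<Sum>j\<in>UNIV. \<bar>M$i$j\<bar>) * vnorm_inf v" by (simp add: sum_distrib_right)
  also have "\<dots> \<le> mnorm_inf M * vnorm_inf v"
    using vi[of undefined] unfolding mnorm_inf_def
    by (intro mult_right_mono Max_ge) (auto intro: order_trans[OF abs_ge_zero])
  finally show ?thesis .
qed
lemma vnorm_ge: "\<bar>v$j\<bar> \<le> vnorm_inf v" unfolding vnorm_inf_def by (rule Max_ge) auto
lemma vnorm_nonneg: "0 \<le> vnorm_inf v" using vnorm_ge[of v undefined] by linarith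
lemma mnorm_nonneg: "0 \<le> mnorm_inf M" unfolding mnorm_inf_def
  by (rule order_trans[OF _ Max_ge[of _ "\<Sum>j\<in>UNIV. \<bar>M$undefined$j\<bar>"]]) (auto intro: sum_nonneg)
lemma vnorm_le_iff: "vnorm_inf v \<le> c \<longleftrightarrow> (\<forall>j. \<bar>v$j\<bar> \<le> c)"
  unfolding vnorm_inf_def by (subst Max_le_iff) auto
lemma vnorm_mv: "vnorm_inf ((M::real^'c^'r) *v v) \<le> mnorm_inf M * vnorm_inf v"
  using comp_bound vnorm_le_iff by blast
lemma vnorm_add: "vnorm_inf (a + b) \<le> vnorm_inf a + vnorm_inf b"
  unfolding vnorm_le_iff using vnorm_ge[of a] vnorm_ge[of b] 
  by (metis abs_triangle_ineq add_mono order_trans vector_add_component)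
lemma vnorm_diff: "vnorm_inf (a - b) \<le> vnorm_inf a + vnorm_inf b"
  unfolding vnorm_le_iff using vnorm_ge[of a] vnorm_ge[of b] 
  by (metis abs_triangle_ineq4 add_mono order_trans vector_minus_component)
lemma vnorm_le_norm: "vnorm_inf v \<le> norm v"
  unfolding vnorm_le_iff by (simp add: component_le_norm_cart)
lemma delta_bound:
  assumes "vnorm_inf x \<le> bx" "vnorm_inf (Q x) \<le> bq" "mnorm_inf W \<le> cw" "vnorm_inf w \<le> hw"
  shows "vnorm_inf (delta X1 G1 G2 Q x W w) \<le>
    mnorm_inf X1 * (mnorm_inf G2 * bq) + cw * (mnorm_inf G1 * bx + mnorm_inf G2 * bq) + hw"
proof -
  have a: "vnorm_inf (G2 *v Q x) \<le> mnorm_inf G2 * bq"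
    by (rule order_trans[OF vnorm_mv]) (intro mult_left_mono assms mnorm_nonneg)
  have b: "vnorm_inf (X1 *v (G2 *v Q x)) \<le> mnorm_inf X1 * (mnorm_inf G2 * bq)"
    by (rule order_trans[OF vnorm_mv]) (intro mult_left_mono a mnorm_nonneg)
  have c1: "vnorm_inf (G1 *v x) \<le> mnorm_inf G1 * bx"
    by (rule order_trans[OF vnorm_mv]) (intro mult_left_mono assms mnorm_nonneg)
  have c: "vnorm_inf (G1 *v x + G2 *v Q x) \<le> mnorm_inf G1 * bx + mnorm_inf G2 * bq"
    using vnorm_add[of "G1 *v x" "G2 *v Q x"] a c1 by linarith
  have d: "vnorm_inf (W *v (G1 *v x + G2 *v Q x)) \<le> cw * (mnorm_inf G1 * bx + mnorm_inf G2 * bq)"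
    apply (rule order_trans[OF vnorm_mv])
    apply (rule mult_mono[OF assms(3) c])
    using mnorm_nonneg[of W] assms(3) vnorm_nonneg by auto
  show ?thesis unfolding delta_def
    using vnorm_add[of "X1 *v (G2 *v Q x) - W *v (G1 *v x + G2 *v Q x)" w]
      vnorm_diff[of "X1 *v (G2 *v Q x)" "W *v (G1 *v x + G2 *v Q x)"] b d assms(4) by linarith
qed

lemma grp_aux: "(p::'a::ab_group_add) = u + v \<Longrightarrow> f = p - r \<Longrightarrow> f + w = u + (v - r + w)"
  by (simp add: algebra_simps)

lemma psum_mono:
  assumes "\<forall>i j. 0 \<le> (P::real^'s^'s) $ i $ j" "y \<le> z"
  shows "(P *v y) $ i \<le> (P *v z) $ i"
  using assms unfolding matrix_vector_mult_def less_eq_vec_def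
  by (auto intro!: sum_mono mult_left_mono)

theorem corollary1:
  fixes A1 :: "real^'n^'n" and A2 :: "real^'N^'n" and B :: "real^'m^'n"
    and S :: "real^'n \<Rightarrow> real^'N" and As :: "real^'n^'N"
    and hw :: real and F :: "real^'n^'s" and g :: "real^'s"
    and xd :: "nat \<Rightarrow> real^'n" and ud :: "nat \<Rightarrow> real^'m" and wd :: "nat \<Rightarrow> real^'n"
    and tau :: "'T::finite \<Rightarrow> nat"
    and lam :: real and GK :: "real^('n + 'N)^'T" and Ps :: "real^'s^'s" and ldw :: "real^'s"
    and Q :: "real^'n \<Rightarrow> real^'N"
    and X0 X1 :: "real^'T^'n" and U0 :: "real^'T^'m" and QX0 :: "real^'T^'N"
    and V0 :: "real^'T^('n + 'N)"
    and GK1 :: "real^'n^'T" and GK2 :: "real^'N^'T" and K1 :: "real^'n^'m" and K2 :: "real^'N^'m"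
  assumes S_diff: "(S has_derivative (\<lambda>h. As *v h)) (at 0)"
    and S_diff_all: "\<forall>x. S differentiable (at x)"
    and S0: "S 0 = 0"
  defines "Q \<equiv> (\<lambda>x. S x - As *v x)"
  assumes stab: "stabilizable (A1 + A2 ** As) B"
    and lip: "\<exists>L. L-lipschitz_on (safe_set F g) Q"
    and Cset: "polyhedral_C_set (safe_set F g)"
    and tau: "bij_betw tau UNIV {..<CARD('T)}"
    and data: "\<forall>t<CARD('T). xd (Suc t) = A1 *v xd t + A2 *v S (xd t) + B *v ud t + wd t"
    and wbound: "\<forall>t<CARD('T). vnorm_inf (wd t) \<le> hw"
  defines "X0 \<equiv> (\<chi> i j. xd (tau j) $ i)"
    and "X1 \<equiv> (\<chi> i j. xd (Suc (tau j)) $ i)"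
    and "U0 \<equiv> (\<chi> i j. ud (tau j) $ i)"
    and "QX0 \<equiv> (\<chi> i j. Q (xd (tau j)) $ i)"
    and "V0 \<equiv> (\<chi> r j. case r of Inl i \<Rightarrow> X0 $ i $ j | Inr k \<Rightarrow> QX0 $ k $ j)"
  assumes rankV0: "rank V0 = CARD('n + 'N)"
    and Tbig: "CARD('T) \<ge> CARD('n) + CARD('N) + 1"
    and lam: "0 < lam" "lam \<le> 1"
  defines "GK1 \<equiv> (\<chi> t i. GK $ t $ Inl i)"
    and "GK2 \<equiv> (\<chi> t k. GK $ t $ Inr k)"
  assumes ldw_def: "\<forall>i. ldw $ i = ldw_obj F g hw X1 GK1 Q i GK2"
    and ldw_min: "\<forall>i (G2::real^'N^'T). ldw_obj F g hw X1 GK1 Q i GK2 \<le> ldw_obj F g hw X1 GK1 Q i G2"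
    and c1: "Ps *v g \<le> lam *\<^sub>R g - ldw"
    and c2: "Ps ** F = F ** X1 ** GK1"
    and c3: "V0 ** GK = mat 1"
    and c4: "\<forall>i j. 0 \<le> Ps $ i $ j"
  defines "K1 \<equiv> U0 ** GK1" and "K2 \<equiv> U0 ** GK2"
  shows "lambda_contractive F g lam hw
           (\<lambda>x. A1 *v x + A2 *v S x + B *v (K1 *v x + K2 *v Q x))
       \<and> robustly_invariant F g hw
           (\<lambda>x. A1 *v x + A2 *v S x + B *v (K1 *v x + K2 *v Q x))"
proof -
  define f where "f = (\<lambda>x. A1 *v x + A2 *v S x + B *v (K1 *v x + K2 *v Q x))"
  define W0 :: "real^'T^'n" where "W0 = (\<chi> i j. wd (tau j) $ i)"
  have tauT: "tau j < CARD('T)" for j using tau by (auto simp: bij_betw_def)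
  have blk1: "X0 ** GK1 = mat 1"
  proof -
    have "(X0 ** GK1) $ i $ k = (V0 ** GK) $ Inl i $ Inl k" for i k
      by (simp add: matrix_matrix_mult_def V0_def GK1_def)
    then show ?thesis using c3 by (simp add: vec_eq_iff mat_def)
  qed
  have blk2: "QX0 ** GK1 = 0"
  proof -
    have "(QX0 ** GK1) $ i $ k = (V0 ** GK) $ Inr i $ Inl k" for i k
      by (simp add: matrix_matrix_mult_def V0_def GK1_def)
    then show ?thesis using c3 by (simp add: vec_eq_iff mat_def)
  qed
  have blk3: "X0 ** GK2 = 0"
  proof -
    have "(X0 ** GK2) $ i $ k = (V0 ** GK) $ Inl i $ Inr k" for i k
      by (simp add: matrix_matrix_mult_def V0_def GK2_def)
    then show ?thesis using c3 by (simp add: vec_eq_iff mat_def)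
  qed
  have blk4: "QX0 ** GK2 = mat 1"
  proof -
    have "(QX0 ** GK2) $ i $ k = (V0 ** GK) $ Inr i $ Inr k" for i k
      by (simp add: matrix_matrix_mult_def V0_def GK2_def)
    then show ?thesis using c3 by (simp add: vec_eq_iff mat_def)
  qed
  have SQ: "S y = As *v y + Q y" for y by (simp add: Q_def)
  have col: "\<And>M::real^'T^'k. \<And>h. M = (\<chi> i j. h (tau j) $ i) \<Longrightarrow>
      M *v a = (\<Sum>j\<in>UNIV. a$j *\<^sub>R h (tau j))" for a
    by (simp add: matrix_mult_sum column_def scalar_mult_eq_scaleR)
  have key: "X1 *v a = A1 *v (X0 *v a) + A2 *v (As *v (X0 *v a)) + A2 *v (QX0 *v a)
       + B *v (U0 *v a) + W0 *v a" for a
  proof -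
    have "X1 *v a = (\<Sum>j\<in>UNIV. a$j *\<^sub>R xd (Suc (tau j)))"
      by (rule col) (simp add: X1_def)
    also have "\<dots> = (\<Sum>j\<in>UNIV. a$j *\<^sub>R (A1 *v xd (tau j) + A2 *v (As *v xd (tau j))
        + A2 *v Q (xd (tau j)) + B *v ud (tau j) + wd (tau j)))"
      using data tauT by (simp add: SQ matrix_vector_right_distrib add.assoc)
    also have "\<dots> = A1 *v (\<Sum>j\<in>UNIV. a$j *\<^sub>R xd (tau j))
        + A2 *v (As *v (\<Sum>j\<in>UNIV. a$j *\<^sub>R xd (tau j)))
        + A2 *v (\<Sum>j\<in>UNIV. a$j *\<^sub>R Q (xd (tau j)))
        + B *v (\<Sum>j\<in>UNIV. a$j *\<^sub>R ud (tau j)) + (\<Sum>j\<in>UNIV. a$j *\<^sub>R wd (tau j))"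
      by (simp add: mv_sum scaleR_right_distrib sum.distrib)
    also have "\<dots> = A1 *v (X0 *v a) + A2 *v (As *v (X0 *v a)) + A2 *v (QX0 *v a)
       + B *v (U0 *v a) + W0 *v a"
      by (simp add: col[OF X0_def[THEN meta_eq_to_obj_eq]] col[OF QX0_def[THEN meta_eq_to_obj_eq]] col[OF U0_def[THEN meta_eq_to_obj_eq]] col[OF W0_def])
    finally show ?thesis .
  qed
  have traj: "f x + w = (X1 ** GK1) *v x + delta X1 GK1 GK2 Q x W0 w" for x w
  proof -
    define a where "a = GK1 *v x + GK2 *v Q x"
    have "X0 *v a = x" unfolding a_def
      by (simp add: matrix_vector_right_distrib matrix_vector_mul_assoc blk1 blk3)
    moreover have "QX0 *v a = Q x" unfolding a_def
      by (simp add: matrix_vector_right_distrib matrix_vector_mul_assoc blk2 blk4)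
    moreover have "U0 *v a = K1 *v x + K2 *v Q x" unfolding a_def K1_def K2_def
      by (simp add: matrix_vector_right_distrib matrix_vector_mul_assoc)
    ultimately have "X1 *v a = A1 *v x + A2 *v (As *v x) + A2 *v Q x + B *v (K1 *v x + K2 *v Q x) + W0 *v a"
      using key[of a] by simp
    then have fx: "f x = X1 *v a - W0 *v a"
      by (simp add: f_def SQ matrix_vector_right_distrib add.assoc)
    have x1a: "X1 *v a = (X1 ** GK1) *v x + X1 *v (GK2 *v Q x)"
      by (simp add: a_def matrix_vector_right_distrib matrix_vector_mul_assoc)
    have dl: "delta X1 GK1 GK2 Q x W0 w = X1 *v (GK2 *v Q x) - W0 *v a + w"
      by (simp add: delta_def a_def)
    show ?thesis unfolding dl using grp_aux[OF x1a fx] .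
  qed
  have W0b: "mnorm_inf W0 \<le> real CARD('T) * hw"
    unfolding mnorm_inf_def
  proof (subst Max_le_iff, auto)
    fix i
    have "(\<Sum>j\<in>UNIV. \<bar>W0 $ i $ j\<bar>) \<le> (\<Sum>j\<in>(UNIV::'T set). hw)"
    proof (rule sum_mono)
      fix j
      have "\<bar>wd (tau j) $ i\<bar> \<le> vnorm_inf (wd (tau j))" by (rule vnorm_ge)
      also have "\<dots> \<le> hw" using wbound tauT by blast
      finally show "\<bar>W0 $ i $ j\<bar> \<le> hw" by (simp add: W0_def)
    qed
    then show "(\<Sum>j\<in>UNIV. \<bar>W0 $ i $ j\<bar>) \<le> real CARD('T) * hw" by simp
  qed
  have cpt: "compact (safe_set F g)" using Cset polyhedral_C_set_def by blast
  then have "bounded (safe_set F g)" by (rule compact_imp_bounded)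
  then obtain bx where bx: "\<forall>x\<in>safe_set F g. norm x \<le> bx"
    unfolding bounded_iff by blast
  have "continuous_on (safe_set F g) Q" using lip lipschitz_on_continuous_on by blast
  then have "compact (Q ` safe_set F g)" using cpt compact_continuous_image by blast
  then have "bounded (Q ` safe_set F g)" by (rule compact_imp_bounded)
  then obtain bq where bq: "\<forall>x\<in>safe_set F g. norm (Q x) \<le> bq"
    unfolding bounded_iff by blast
  have core: "F *v (f x + w) \<le> lam *\<^sub>R g" if Fx: "F *v x \<le> g" and wb: "vnorm_inf w \<le> hw" for x w
  proof -
    let ?d = "delta X1 GK1 GK2 Q x W0 w"
    have xin: "x \<in> safe_set F g" using Fx by (simp add: safe_set_def)
    have e1: "F *v (f x + w) = Ps *v (F *v x) + F *v ?d"
      by (simp add: traj matrix_vector_right_distrib matrix_vector_mul_assoc matrix_mul_assoc c2[symmetric])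
    have e2: "(F *v ?d) $ i \<le> ldw $ i" for i
    proof -
      let ?Set = "{(F *v delta X1 GK1 GK2 Q x W w) $ i | x W w.
            F *v x \<le> g \<and> mnorm_inf W \<le> real CARD('T) * hw \<and> vnorm_inf w \<le> hw}"
      have mem: "(F *v ?d) $ i \<in> ?Set" using Fx W0b wb by blast
      have "bdd_above ?Set"
      proof (rule bdd_aboveI)
        fix y assume "y \<in> ?Set"
        then obtain x' W w' where y: "y = (F *v delta X1 GK1 GK2 Q x' W w') $ i"
          and h: "F *v x' \<le> g" "mnorm_inf W \<le> real CARD('T) * hw" "vnorm_inf w' \<le> hw" by blast
        have x'in: "x' \<in> safe_set F g" using h by (simp add: safe_set_def)
        have db: "vnorm_inf (delta X1 GK1 GK2 Q x' W w') \<le>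
          mnorm_inf X1 * (mnorm_inf GK2 * bq) + real CARD('T) * hw * (mnorm_inf GK1 * bx + mnorm_inf GK2 * bq) + hw"
          apply (rule delta_bound[OF _ _ h(2) h(3)])
          using x'in bx bq order_trans[OF vnorm_le_norm] by blast+
        have "y \<le> \<bar>y\<bar>" by simp
        also have "\<dots> \<le> mnorm_inf F * vnorm_inf (delta X1 GK1 GK2 Q x' W w')"
          unfolding y by (rule comp_bound)
        also have "\<dots> \<le> mnorm_inf F * (mnorm_inf X1 * (mnorm_inf GK2 * bq) + real CARD('T) * hw * (mnorm_inf GK1 * bx + mnorm_inf GK2 * bq) + hw)"
          by (intro mult_left_mono db mnorm_nonneg)
        finally show "y \<le> mnorm_inf F * (mnorm_inf X1 * (mnorm_inf GK2 * bq) + real CARD('T) * hw * (mnorm_inf GK1 * bx + mnorm_inf GK2 * bq) + hw)" .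
      qed
      then have "(F *v ?d) $ i \<le> Sup ?Set" by (rule cSup_upper[OF mem])
      then show ?thesis using ldw_def by (simp add: ldw_obj_def)
    qed
    have e3: "(Ps *v (F *v x)) $ i \<le> (Ps *v g) $ i" for i
      by (rule psum_mono[OF c4 Fx])
    show ?thesis unfolding less_eq_vec_def
    proof
      fix i
      have "(Ps *v g) $ i \<le> lam * g $ i - ldw $ i" using c1 unfolding less_eq_vec_def by simp
      then show "(F *v (f x + w)) $ i \<le> (lam *\<^sub>R g) $ i"
        using e1 e2[of i] e3[of i] by simp
    qed
  qed
  have g0: "0 \<le> g"
  proof -
    have "0 \<in> safe_set F g" using Cset interior_subset unfolding polyhedral_C_set_def by blast
    then show ?thesis by (simp add: safe_set_def)
  qed
  have lc: "lambda_contractive F g lam hw f"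
    unfolding lambda_contractive_def
  proof (intro allI impI)
    fix xs ws t
    assume H: "\<forall>t. xs (Suc t) = f (xs t) + ws t \<and> vnorm_inf (ws t) \<le> hw" and Ft: "F *v xs t \<le> g"
    have "xs (Suc t) = f (xs t) + ws t" "vnorm_inf (ws t) \<le> hw" using H by auto
    then show "F *v xs (Suc t) \<le> lam *\<^sub>R g" using core[OF Ft] by simp
  qed
  have ri: "robustly_invariant F g hw f"
    unfolding robustly_invariant_def
  proof (intro allI impI)
    fix xs ws t
    assume H: "\<forall>t. xs (Suc t) = f (xs t) + ws t \<and> vnorm_inf (ws t) \<le> hw" and H0: "F *v xs 0 \<le> g"
    show "F *v xs t \<le> g"
    proof (induction t)
      case 0 then show ?case using H0 .
    next
      case (Suc t)
      have "xs (Suc t) = f (xs t) + ws t" "vnorm_inf (ws t) \<le> hw" using H by auto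
      then have "F *v xs (Suc t) \<le> lam *\<^sub>R g" using core[OF Suc.IH] by simp
      moreover have "lam *\<^sub>R g \<le> g" using g0 lam unfolding less_eq_vec_def
        by (auto intro: mult_left_le_one_le)
      ultimately show ?case by (rule order_trans)
    qed
  qed
  show ?thesis using lc ri unfolding f_def by blast
qed

end
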